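(* Let $\mathscr{U}$ be a bounded monomial polyhedron represented by $B\in M_n(\mathbb{Z})$ with $\det B>0$ and $B^{-1}\succeq0$, and let $A=\operatorname{adj}B$ with columns $a_1,\dots,a_n$. Let $\mathscr{S}_2(\mathscr{U})=\{\beta\in(\mathbb{Z}^n)^\dagger: z^\beta\in L^2(\mathscr{U})\}$. Then: (1) $\beta\in\mathscr{S}_2(\mathscr{U})$ if and only if $(\beta+\mathbb{1})A\succeq g(A)$; (2) for each $1\le j\le n$, the set $\Pi_j=\{\beta\in(\mathbb{Z}^n)^\dagger: (\beta+\mathbb{1})a_j=\gcd(a_j)\}$ satisfies $\Pi_j\cap\mathscr{S}_2(\mathscr{U})\neq\emptyset$.
   Context: A monomial polyhedron defined by $B$ with rows $b^j$ is $\{z\in\mathbb{C}^n:\prod_k|z_k|^{b^j_k}<1\ \forall j\}$, excluding points where a product is undefined due to division by zero. $\mathbb{1}=(1,\dots,1)$ row vector; $\succeq$ is entrywise order. $\gcd(a_j)$ is the greatest common divisor of the entries of column $a_j$ (columns of $A$ are nonzero), and $g(A)=(\gcd(a_1),\dots,\gcd(a_n))\in(\mathbb{Z}^n)^\dagger$. $(\beta+\mathbb{1})a_j=\sum_k(\beta_k+1)a^k_j$. *)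

theory Defs
  imports "HOL-Analysis.Analysis"
begin

text \<open>Integer matrices are int^'n^'n, rows indexed first: B $ j $ k is the entry in row j,
  column k; the row b^j is B $ j.  Row vectors beta are int^'n.\<close>

text \<open>Adjugate (classical adjoint): adj B = transpose of the cofactor matrix, where the
  (j,i) cofactor equals det of B with row j replaced by the i-th standard unit vector.\<close>
definition adjugate :: "'a::comm_ring_1^'n^'n \<Rightarrow> 'a^'n^'n" where
  "adjugate B = (\<chi> i j. det (\<chi> r. if r = j then axis i 1 else B $ r))"

definition real_mat :: "int^'n^'m \<Rightarrow> real^'n^'m" where
  "real_mat B = (\<chi> i j. real_of_int (B $ i $ j))"

text \<open>Monomial polyhedron defined by B (points where some product is undefined because
  of division by zero are excluded).\<close>
definition monomial_polyhedron :: "int^'n^'n \<Rightarrow> (complex^'n) set" where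
  "monomial_polyhedron B =
     {z. (\<forall>j k. B $ j $ k < 0 \<longrightarrow> z $ k \<noteq> 0) \<and>
         (\<forall>j. (\<Prod>k\<in>UNIV. cmod (z $ k) powi (B $ j $ k)) < 1)}"

definition monomial :: "int^'n \<Rightarrow> complex^'n \<Rightarrow> complex" where
  "monomial \<beta> z = (\<Prod>k\<in>UNIV. (z $ k) powi (\<beta> $ k))"

definition S2 :: "(complex^'n) set \<Rightarrow> (int^'n) set" where
  "S2 U = {\<beta>. monomial \<beta> \<in> borel_measurable (lebesgue_on U) \<and>
              (\<integral>\<^sup>+ z. ennreal ((cmod (monomial \<beta> z))\<^sup>2) \<partial>(lebesgue_on U)) < \<infinity>}"

definition shifted_col :: "int^'n \<Rightarrow> int^'n^'n \<Rightarrow> 'n \<Rightarrow> int" where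
  "shifted_col \<beta> A j = (\<Sum>k\<in>UNIV. (\<beta> $ k + 1) * A $ k $ j)"

definition col_gcd :: "int^'n^'n \<Rightarrow> 'n \<Rightarrow> int" where
  "col_gcd A j = Gcd (range (\<lambda>k. A $ k $ j))"

end

theory Submission
  imports Defs
begin

lemma adj_left:
  fixes B :: "int^'n^'n"
  shows "(\<Sum>j\<in>UNIV. B$k$j * adjugate B $ j $ r) = (if k = r then det B else 0)"
proof -
  have "(\<Sum>j\<in>UNIV. B$k$j * adjugate B $ j $ r)
      = (\<Sum>j\<in>UNIV. det (\<chi> s. if s = r then B$k$j *s axis j 1 else B$s))"
    unfolding adjugate_def by (simp add: det_row_mul)
  also have "\<dots> = det (\<chi> s. if s = r then (\<Sum>j\<in>UNIV. B$k$j *s axis j 1) else B$s)"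
    by (rule det_linear_row_sum[symmetric]) simp
  also have "(\<Sum>j\<in>UNIV. B$k$j *s axis j (1::int)) = B$k"
    by (simp add: vec_eq_iff sum.delta axis_def if_distrib cong: if_cong)
  also have "det (\<chi> s. if s = r then B$k else B$s) = (if k = r then det B else 0)"
  proof (cases "k = r")
    case True
    then have "(\<chi> s. if s = r then B$k else B$s) = B" by (simp add: vec_eq_iff)
    then show ?thesis using True by simp
  next
    case False
    show ?thesis using False
      by (intro trans[OF det_identical_rows[of r k]]) (auto simp: row_def vec_eq_iff)
  qed
  finally show ?thesis .
qed

lemma adj_right:
  fixes B :: "int^'n^'n"
  assumes "det B \<noteq> 0"
  shows "(\<Sum>j\<in>UNIV. adjugate B $ i $ j * B$j$k) = (if i = k then det B else 0)"
proof -
  let ?d = "real_of_int (det B)"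
  define Br where "Br = real_mat B"
  define Ar where "Ar = (1 / ?d) *\<^sub>R real_mat (adjugate B)"
  have "Br ** Ar = mat 1"
  proof -
    have "(Br ** Ar) $ i' $ k' = mat 1 $ i' $ k'" for i' k'
    proof -
      have "(Br ** Ar) $ i' $ k' = (1/?d) * real_of_int (\<Sum>j\<in>UNIV. B$i'$j * adjugate B $ j $ k')"
        by (simp add: matrix_matrix_mult_def Br_def Ar_def real_mat_def sum_distrib_left)
      also have "\<dots> = mat 1 $ i' $ k'"
        using assms by (simp add: adj_left mat_def)
      finally show ?thesis .
    qed
    then show ?thesis by (simp add: vec_eq_iff)
  qed
  then have "Ar ** Br = mat 1" using matrix_left_right_inverse by blast
  then have "(Ar ** Br) $ i $ k = mat 1 $ i $ k" by simp
  then have "(1/?d) * real_of_int (\<Sum>j\<in>UNIV. adjugate B $ i $ j * B$j$k) = (if i = k then 1 else 0)"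
    by (simp add: matrix_matrix_mult_def Br_def Ar_def real_mat_def mat_def sum_distrib_left)
  then have "real_of_int (\<Sum>j\<in>UNIV. adjugate B $ i $ j * B$j$k) = real_of_int (if i = k then det B else 0)"
    using assms by (auto simp: field_simps split: if_splits)
  then show ?thesis by (simp only: of_int_eq_iff)
qed

lemma Gcd_bezout_finite:
  fixes f :: "'a \<Rightarrow> int"
  assumes "finite S"
  shows "\<exists>c. (\<Sum>k\<in>S. c k * f k) = Gcd (f ` S)"
  using assms
proof (induction S rule: finite_induct)
  case empty
  then show ?case by simp
next
  case (insert a S)
  then obtain c where c: "(\<Sum>k\<in>S. c k * f k) = Gcd (f ` S)" by blast
  obtain u v where uv: "u * f a + v * Gcd (f ` S) = gcd (f a) (Gcd (f ` S))"
    using bezout_int by blast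
  define c' where "c' = (\<lambda>k. v * c k)(a := u)"
  have "(\<Sum>k\<in>insert a S. c' k * f k) = u * f a + (\<Sum>k\<in>S. v * c k * f k)"
    using insert.hyps by (simp add: c'_def) (intro sum.cong, auto)
  also have "(\<Sum>k\<in>S. v * c k * f k) = v * Gcd (f ` S)"
    by (simp add: c[symmetric] sum_distrib_left mult.assoc)
  finally show ?case using uv by auto
qed


lemma borel_measurable_powi_real: "(\<lambda>x::real. x powi n) \<in> borel_measurable borel"
proof (cases "n \<ge> 0")
  case True
  then have "(\<lambda>x::real. x powi n) = (\<lambda>x. x ^ nat n)" by (auto simp: power_int_def)
  then show ?thesis by simp
next
  case False
  then have "(\<lambda>x::real. x powi n) = (\<lambda>x. inverse x ^ nat (-n))" by (auto simp: power_int_def fun_eq_iff)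
  then show ?thesis by (simp add: borel_measurable_inverse)
qed

lemma borel_measurable_powi_complex: "(\<lambda>x::complex. x powi n) \<in> borel_measurable borel"
proof (cases "n \<ge> 0")
  case True
  then have "(\<lambda>x::complex. x powi n) = (\<lambda>x. x ^ nat n)" by (auto simp: power_int_def)
  then show ?thesis by simp
next
  case False
  then have "(\<lambda>x::complex. x powi n) = (\<lambda>x. inverse x ^ nat (-n))" by (auto simp: power_int_def fun_eq_iff)
  then show ?thesis by (simp add: borel_measurable_inverse)
qed

lemma vec_nth_measurable[measurable]: "(\<lambda>z::'a::euclidean_space^'n. z $ k) \<in> borel_measurable borel"
  by (intro borel_measurable_continuous_onI continuous_intros)

lemma monomial_measurable: "monomial \<beta> \<in> borel_measurable borel"
  unfolding monomial_def
  by (intro borel_measurable_prod measurable_compose[OF _ borel_measurable_powi_complex])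
    (auto intro: borel_measurable_continuous_onI continuous_intros)


lemma U_borel: fixes B :: "int^'n^'n" shows "monomial_polyhedron B \<in> sets borel"
proof -
  have m: "(\<lambda>z::complex^'n. \<Prod>k\<in>UNIV. cmod (z $ k) powi (B $ j $ k)) \<in> borel_measurable borel" for j
    by (intro borel_measurable_prod measurable_compose[OF _ borel_measurable_powi_real])
      (auto intro: borel_measurable_continuous_onI continuous_intros)
  have "monomial_polyhedron B = (\<Inter>j. \<Inter>k. {z. B$j$k < 0 \<longrightarrow> z $ k \<noteq> 0}) \<inter>
          (\<Inter>j. {z. (\<Prod>k\<in>UNIV. cmod (z $ k) powi (B $ j $ k)) < 1})"
    unfolding monomial_polyhedron_def by auto
  also have "\<dots> \<in> sets borel"
    using m by measurable
  finally show ?thesis .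
qed

definition Qm :: "int^'n \<Rightarrow> (complex^'n) set" where
  "Qm m = {z. \<forall>k. 2 powr (- real_of_int (m$k) - 1) < cmod (z$k) \<and> cmod (z$k) \<le> 2 powr (- real_of_int (m$k))}"

lemma Qm_borel: "Qm m \<in> sets borel"
proof -
  have "Qm m = (\<Inter>k. {z. 2 powr (- real_of_int (m$k) - 1) < cmod (z$k)} \<inter> {z. cmod (z$k) \<le> 2 powr (- real_of_int (m$k))})"
    unfolding Qm_def by auto
  also have "\<dots> \<in> sets borel" by measurable
  finally show ?thesis .
qed

lemma powr_shell:
  fixes r x b :: real
  assumes "0 < r" "r / 2 < x" "x \<le> r"
  shows "x powr b \<le> r powr b * 2 powr \<bar>b\<bar>" "r powr b * 2 powr (-\<bar>b\<bar>) \<le> x powr b"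
proof -
  define t where "t = x / r"
  have t: "1/2 < t" "t \<le> 1" using assms by (auto simp: t_def field_simps)
  have x: "x = r * t" using assms by (simp add: t_def)
  have "t powr b \<le> 2 powr \<bar>b\<bar> \<and> 2 powr (-\<bar>b\<bar>) \<le> t powr b"
  proof (cases "b \<ge> 0")
    case True
    have "t powr b \<le> 1 powr b" using t True by (intro powr_mono2) auto
    moreover have "1 \<le> 2 powr \<bar>b\<bar>" by (intro ge_one_powr_ge_zero) auto
    moreover have "(1/2) powr b \<le> t powr b" using t True by (intro powr_mono2) auto
    moreover have "(1/2::real) powr b = 2 powr (-\<bar>b\<bar>)" using True
      by (simp add: powr_divide powr_minus_divide)
    ultimately show ?thesis by simp
  next
    case False
    have "t powr b \<le> (1/2) powr b" using t False by (intro powr_mono2') auto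
    moreover have "(1/2::real) powr b = 2 powr \<bar>b\<bar>" using False
      by (simp add: powr_divide powr_minus_divide)
    moreover have "1 powr b \<le> t powr b" using t False by (intro powr_mono2') auto
    moreover have "2 powr (-\<bar>b\<bar>) \<le> (1::real)" using powr_mono[of "-\<bar>b\<bar>" 0 "2::real"] by simp
    ultimately show ?thesis by simp
  qed
  then show "x powr b \<le> r powr b * 2 powr \<bar>b\<bar>" "r powr b * 2 powr (-\<bar>b\<bar>) \<le> x powr b"
    using assms by (auto simp: x powr_mult intro: mult_left_mono)
qed

lemma Qm_nonzero: "z \<in> Qm m \<Longrightarrow> cmod (z $ k) > 0"
  unfolding Qm_def by (smt (verit) mem_Collect_eq powr_ge_zero)

lemma Qm_shell:
  assumes "z \<in> Qm m"
  shows "2 powr (- real_of_int (m$k)) / 2 < cmod (z$k)" "cmod (z$k) \<le> 2 powr (- real_of_int (m$k))"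
  using assms unfolding Qm_def by (auto simp: powr_diff)

lemma Qm_powr_bounds:
  assumes "z \<in> Qm m"
  shows "cmod (z$k) powr b \<le> 2 powr (- b * real_of_int (m$k)) * 2 powr \<bar>b\<bar>"
        "2 powr (- b * real_of_int (m$k)) * 2 powr (-\<bar>b\<bar>) \<le> cmod (z$k) powr b"
  using powr_shell[OF _ Qm_shell[OF assms], of k b]
  by (simp_all add: powr_powr mult.commute)

lemma prod_powr_bounds:
  fixes e :: "'n::finite \<Rightarrow> real"
  assumes "z \<in> Qm m"
  shows "(\<Prod>k\<in>UNIV. cmod (z$k) powr e k) \<le> 2 powr (- (\<Sum>k\<in>UNIV. e k * m$k)) * 2 powr (\<Sum>k\<in>UNIV. \<bar>e k\<bar>)"
        "2 powr (- (\<Sum>k\<in>UNIV. e k * m$k)) * 2 powr (- (\<Sum>k\<in>UNIV. \<bar>e k\<bar>)) \<le> (\<Prod>k\<in>UNIV. cmod (z$k) powr e k)"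
proof -
  have eq1: "2 powr (- (\<Sum>k\<in>UNIV. e k * m$k)) * 2 powr (\<Sum>k\<in>UNIV. \<bar>e k\<bar>)
      = (\<Prod>k\<in>UNIV. 2 powr (- e k * m$k) * 2 powr \<bar>e k\<bar>)"
    by (simp add: prod.distrib powr_sum flip: sum_negf)
  have eq2: "2 powr (- (\<Sum>k\<in>UNIV. e k * m$k)) * 2 powr (- (\<Sum>k\<in>UNIV. \<bar>e k\<bar>))
      = (\<Prod>k\<in>UNIV. 2 powr (- e k * m$k) * 2 powr (-\<bar>e k\<bar>))"
    by (simp add: prod.distrib powr_sum flip: sum_negf)
  show "(\<Prod>k\<in>UNIV. cmod (z$k) powr e k) \<le> 2 powr (- (\<Sum>k\<in>UNIV. e k * m$k)) * 2 powr (\<Sum>k\<in>UNIV. \<bar>e k\<bar>)"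
    unfolding eq1 by (intro prod_mono) (use Qm_powr_bounds[OF assms] in auto)
  show "2 powr (- (\<Sum>k\<in>UNIV. e k * m$k)) * 2 powr (- (\<Sum>k\<in>UNIV. \<bar>e k\<bar>)) \<le> (\<Prod>k\<in>UNIV. cmod (z$k) powr e k)"
    unfolding eq2 by (intro prod_mono) (use Qm_powr_bounds[OF assms] in auto)
qed

lemma powr_sq: "((x::real) powr a)^2 = x powr (2*a)"
  by (metis mult_2 power2_eq_square powr_add)

lemma monomial_norm_sq:
  assumes "\<forall>k. z $ k \<noteq> 0"
  shows "(cmod (monomial \<beta> z))\<^sup>2 = (\<Prod>k\<in>UNIV. cmod (z$k) powr (2 * \<beta>$k))"
proof -
  have "cmod (monomial \<beta> z) = (\<Prod>k\<in>UNIV. cmod (z$k) powr (\<beta>$k))"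
    using assms unfolding monomial_def
    by (simp add: prod_norm[symmetric] norm_power_int powr_real_of_int')
  then have "(cmod (monomial \<beta> z))\<^sup>2 = (\<Prod>k\<in>UNIV. (cmod (z$k) powr (\<beta>$k))\<^sup>2)"
    by (simp add: prod_power_distrib)
  also have "\<dots> = (\<Prod>k\<in>UNIV. cmod (z$k) powr (2 * \<beta>$k))"
    by (intro prod.cong refl) (simp add: powr_sq)
  finally show ?thesis .
qed

lemma U_iff:
  fixes B :: "int^'n^'n"
  assumes "\<forall>k. z $ k \<noteq> 0"
  shows "z \<in> monomial_polyhedron B \<longleftrightarrow> (\<forall>j. (\<Prod>k\<in>UNIV. cmod (z$k) powr (B$j$k)) < 1)"
  using assms unfolding monomial_polyhedron_def by (simp add: powr_real_of_int')

lemma mem_cbox_cvec: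
  "(x::complex^'n) \<in> cbox a b \<longleftrightarrow> (\<forall>i. Re(a$i) \<le> Re(x$i) \<and> Re(x$i) \<le> Re(b$i) \<and> Im(a$i) \<le> Im(x$i) \<and> Im(x$i) \<le> Im(b$i))"
  by (auto simp: mem_box Basis_vec_def inner_axis Basis_complex_def)

lemma prod_Basis_cvec:
  "(\<Prod>b\<in>(Basis::(complex^'n) set). f b) = (\<Prod>i\<in>UNIV. f (axis i 1) * f (axis i \<i>))"
proof -
  have B: "(Basis::(complex^'n) set) = (\<lambda>(i,u). axis i u) ` (UNIV \<times> Basis)"
    by (auto simp: Basis_vec_def)
  have inj: "inj_on (\<lambda>(i,u). axis i u :: complex^'n) (UNIV \<times> Basis)"
    by (auto simp: inj_on_def axis_eq_axis Basis_complex_def)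
  have "(\<Prod>b\<in>(Basis::(complex^'n) set). f b) = (\<Prod>(i,u)\<in>UNIV \<times> Basis. f (axis i u))"
    unfolding B by (subst prod.reindex[OF inj]) (simp add: case_prod_unfold)
  also have "\<dots> = (\<Prod>i\<in>UNIV. \<Prod>u\<in>Basis. f (axis i u))"
    by (simp add: prod.cartesian_product)
  also have "\<dots> = (\<Prod>i\<in>UNIV. f (axis i 1) * f (axis i \<i>))"
    by (simp add: Basis_complex_def)
  finally show ?thesis .
qed

lemma emeasure_cbox_cvec:
  assumes "\<forall>i. Re(a$i) \<le> Re(b$i) \<and> Im (a$i) \<le> Im(b$i)"
  shows "emeasure lborel (cbox a (b::complex^'n)) = ennreal (\<Prod>i\<in>UNIV. (Re(b$i) - Re(a$i)) * (Im(b$i) - Im(a$i)))"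
proof -
  have "\<forall>u\<in>Basis. a \<bullet> u \<le> b \<bullet> u"
    using assms by (auto simp: Basis_vec_def inner_axis Basis_complex_def)
  then show ?thesis
    by (simp add: emeasure_lborel_cbox_eq prod_Basis_cvec inner_axis)
qed

lemma Qm_box_upper:
  "emeasure lborel (Qm m) \<le> ennreal (\<Prod>k\<in>UNIV. 4 * 2 powr (- 2 * real_of_int (m$k)))"
proof -
  define r where "r k = 2 powr (- real_of_int (m$k))" for k
  have sub: "Qm m \<subseteq> cbox (\<chi> k. Complex (- r k) (- r k)) (\<chi> k. Complex (r k) (r k))"
  proof
    fix z assume z: "z \<in> Qm m"
    have c: "cmod (z$k) \<le> r k" for k using Qm_shell(2)[OF z] by (simp add: r_def)
    have "\<bar>Re (z$k)\<bar> \<le> r k" "\<bar>Im (z$k)\<bar> \<le> r k" for k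
      using order_trans[OF abs_Re_le_cmod c] order_trans[OF abs_Im_le_cmod c] by auto
    then show "z \<in> cbox (\<chi> k. Complex (- r k) (- r k)) (\<chi> k. Complex (r k) (r k))"
      unfolding mem_cbox_cvec by (force simp: abs_le_iff minus_le_iff)
  qed
  have "emeasure lborel (Qm m) \<le> emeasure lborel (cbox (\<chi> k. Complex (- r k) (- r k)) (\<chi> k. Complex (r k) (r k)))"
    by (intro emeasure_mono sub) simp
  also have "\<dots> = ennreal (\<Prod>k\<in>UNIV. (2 * r k) * (2 * r k))"
    by (subst emeasure_cbox_cvec) (auto simp: r_def intro!: prod.cong)
  also have "(\<Prod>k\<in>UNIV. (2 * r k) * (2 * r k)) = (\<Prod>k\<in>UNIV. 4 * 2 powr (- 2 * real_of_int (m$k)))"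
    by (intro prod.cong refl) (simp add: r_def flip: powr_add)
  finally show ?thesis .
qed

definition Em :: "int^'n \<Rightarrow> (complex^'n) set" where
  "Em m = cbox (\<chi> k. Complex (3/5 * 2 powr (- real_of_int (m$k))) 0) (\<chi> k. Complex (7/10 * 2 powr (- real_of_int (m$k))) (2 powr (- real_of_int (m$k)) / 10))"

lemma Em_sub: "Em m \<subseteq> Qm m"
proof
  fix z assume z: "z \<in> Em m"
  show "z \<in> Qm m" unfolding Qm_def
  proof (intro CollectI allI conjI)
    fix k
    define r where "r = 2 powr (- real_of_int (m$k))"
    have r: "r > 0" by (simp add: r_def)
    have re: "3/5 * r \<le> Re (z$k)" "Re (z$k) \<le> 7/10 * r" and im: "0 \<le> Im (z$k)" "Im (z$k) \<le> r/10"
      using z unfolding Em_def mem_cbox_cvec by (auto simp: r_def)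
    have "2 powr (- real_of_int (m$k) - 1) = r / 2" by (simp add: r_def powr_diff)
    also have "\<dots> < Re (z$k)" using re r by simp
    also have "\<dots> \<le> cmod (z$k)" by (rule complex_Re_le_cmod)
    finally show "2 powr (- real_of_int (m$k) - 1) < cmod (z$k)" .
    have "(cmod (z$k))\<^sup>2 = (Re (z$k))\<^sup>2 + (Im (z$k))\<^sup>2" by (rule cmod_power2)
    also have "\<dots> \<le> (7/10 * r)\<^sup>2 + (r/10)\<^sup>2"
      using re im r by (intro add_mono power_mono) auto
    also have "\<dots> \<le> r\<^sup>2" by (simp add: power2_eq_square field_simps)
    finally have sq: "(cmod (z$k))\<^sup>2 \<le> r\<^sup>2" .
    have "cmod (z$k) \<le> r" using power2_le_imp_le[OF sq] r by simp
    then show "cmod (z$k) \<le> 2 powr (- real_of_int (m$k))" by (simp add: r_def)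
  qed
qed

lemma Em_measure:
  "emeasure lborel (Em m) = ennreal (\<Prod>k\<in>UNIV. 1/100 * 2 powr (- 2 * real_of_int (m$k)))"
proof -
  have "emeasure lborel (Em m) = ennreal (\<Prod>k\<in>UNIV. (2 powr (- real_of_int (m$k)) / 10) * (2 powr (- real_of_int (m$k)) / 10))"
    unfolding Em_def
    by (subst emeasure_cbox_cvec) (auto intro!: prod.cong simp: field_simps)
  also have "(\<Prod>k\<in>UNIV. (2 powr (- real_of_int (m$k)) / 10) * (2 powr (- real_of_int (m$k)) / 10)) = (\<Prod>k\<in>UNIV. 1/100 * 2 powr (- 2 * real_of_int (m$k)))"
    by (intro prod.cong refl) (simp add: flip: powr_add)
  finally show ?thesis .
qed

lemma Qm_disjoint: "m \<noteq> m' \<Longrightarrow> Qm m \<inter> Qm m' = {}"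
proof (rule ccontr)
  assume "m \<noteq> m'" "Qm m \<inter> Qm m' \<noteq> {}"
  then obtain z where z: "z \<in> Qm m" "z \<in> Qm m'" by blast
  from \<open>m \<noteq> m'\<close> obtain k where k: "m$k \<noteq> m'$k" by (auto simp: vec_eq_iff)
  have a: "2 powr (- real_of_int (m$k) - 1) < cmod (z$k)" "cmod (z$k) \<le> 2 powr (- real_of_int (m$k))"
   and b: "2 powr (- real_of_int (m'$k) - 1) < cmod (z$k)" "cmod (z$k) \<le> 2 powr (- real_of_int (m'$k))"
    using z unfolding Qm_def by auto
  show False
  proof (cases "m$k < m'$k")
    case True
    then have "- real_of_int (m'$k) \<le> - real_of_int (m$k) - 1" by linarith
    then have "2 powr (- real_of_int (m'$k)) \<le> 2 powr (- real_of_int (m$k) - 1)" by simp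
    then show False using a b by linarith
  next
    case False
    then have "- real_of_int (m$k) \<le> - real_of_int (m'$k) - 1" using k by linarith
    then have "2 powr (- real_of_int (m$k)) \<le> 2 powr (- real_of_int (m'$k) - 1)" by simp
    then show False using a b by linarith
  qed
qed

lemma Qm_cover:
  assumes "\<forall>k. z $ k \<noteq> 0"
  shows "z \<in> Qm (\<chi> k. \<lfloor>- log 2 (cmod (z$k))\<rfloor>)"
  unfolding Qm_def
proof (intro CollectI allI conjI)
  fix k
  define x where "x = - log 2 (cmod (z$k))"
  have c: "cmod (z$k) > 0" using assms by auto
  have cx: "cmod (z$k) = 2 powr (- x)" using c by (simp add: x_def)
  have f: "of_int \<lfloor>x\<rfloor> \<le> x" "x < of_int \<lfloor>x\<rfloor> + 1" by linarith+
  have e: "(\<chi> k. \<lfloor>- log 2 (cmod (z$k))\<rfloor>) $ k = \<lfloor>x\<rfloor>" by (simp add: x_def)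
  show "2 powr (- real_of_int ((\<chi> k. \<lfloor>- log 2 (cmod (z$k))\<rfloor>) $ k) - 1) < cmod (z $ k)"
    unfolding cx e by (intro powr_less_mono) (use f in linarith)+
  show "cmod (z $ k) \<le> 2 powr (- real_of_int ((\<chi> k. \<lfloor>- log 2 (cmod (z$k))\<rfloor>) $ k))"
    unfolding cx e by (intro powr_mono) (use f in linarith)+
qed

lemma AE_nonzero: "AE z in lborel. \<forall>k. (z::complex^'n) $ k \<noteq> 0"
proof -
  have null: "{z::complex^'n. z $ k = 0} \<in> null_sets lborel" for k
  proof -
    have "{z::complex^'n. z $ k = 0} \<subseteq> {z. axis k 1 \<bullet> z = 0}"
      by (auto simp: inner_axis inner_commute)
    moreover have "negligible {z::complex^'n. axis k 1 \<bullet> z = 0}"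
      by (rule negligible_hyperplane) (simp add: axis_eq_0_iff)
    ultimately have "negligible {z::complex^'n. z $ k = 0}" using negligible_subset by blast
    then have "{z::complex^'n. z $ k = 0} \<in> null_sets lebesgue" by (simp add: negligible_iff_null_sets)
    moreover have "{z::complex^'n. z $ k = 0} \<in> sets lborel" by measurable
    ultimately show ?thesis using null_sets_completion_iff by blast
  qed
  have "(\<Union>k. {z::complex^'n. z $ k = 0}) \<in> null_sets lborel"
    using null by (intro null_sets_UN') auto
  then show ?thesis by (rule AE_I') auto
qed

lemma U_Qm_cond:
  fixes B :: "int^'n^'n"
  assumes "z \<in> Qm m" "z \<in> monomial_polyhedron B"
  shows "(\<Sum>k\<in>UNIV. B$j$k * m$k) + (\<Sum>k\<in>UNIV. \<bar>B$j$k\<bar>) > 0"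
proof -
  have nz: "\<forall>k. z $ k \<noteq> 0" using Qm_nonzero[OF assms(1)] by fastforce
  have lt: "(\<Prod>k\<in>UNIV. cmod (z$k) powr (B$j$k)) < 1" using assms(2) U_iff[OF nz] by blast
  have "2 powr (- (\<Sum>k\<in>UNIV. real_of_int (B$j$k) * m$k)) * 2 powr (- (\<Sum>k\<in>UNIV. \<bar>real_of_int (B$j$k)\<bar>)) < 1"
    using prod_powr_bounds(2)[OF assms(1), of "\<lambda>k. real_of_int (B$j$k)"] lt by linarith
  then have "2 powr (- (\<Sum>k\<in>UNIV. real_of_int (B$j$k) * m$k) - (\<Sum>k\<in>UNIV. \<bar>real_of_int (B$j$k)\<bar>)) < 2 powr 0"
    by (simp add: powr_add[symmetric])
  then have "0 < (\<Sum>k\<in>UNIV. real_of_int (B$j$k) * m$k) + (\<Sum>k\<in>UNIV. \<bar>real_of_int (B$j$k)\<bar>)"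
    by (simp only: powr_less_cancel_iff[of 2])
  then have "0 < real_of_int ((\<Sum>k\<in>UNIV. B$j$k * m$k) + (\<Sum>k\<in>UNIV. \<bar>B$j$k\<bar>))"
    by simp
  then show ?thesis by (simp only: of_int_0_less_iff)
qed

lemma Qm_U_cond:
  fixes B :: "int^'n^'n"
  assumes "z \<in> Qm m" "\<forall>j. (\<Sum>k\<in>UNIV. B$j$k * m$k) > (\<Sum>k\<in>UNIV. \<bar>B$j$k\<bar>)"
  shows "z \<in> monomial_polyhedron B"
proof -
  have nz: "\<forall>k. z $ k \<noteq> 0" using Qm_nonzero[OF assms(1)] by fastforce
  have "(\<Prod>k\<in>UNIV. cmod (z$k) powr (B$j$k)) < 1" for j
  proof -
    have "real_of_int (\<Sum>k\<in>UNIV. \<bar>B$j$k\<bar>) < real_of_int (\<Sum>k\<in>UNIV. B$j$k * m$k)"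
      using assms(2) by (simp only: of_int_less_iff)
    then have "- (\<Sum>k\<in>UNIV. real_of_int (B$j$k) * m$k) + (\<Sum>k\<in>UNIV. \<bar>real_of_int (B$j$k)\<bar>) < 0"
      by simp
    then have "2 powr (- (\<Sum>k\<in>UNIV. real_of_int (B$j$k) * m$k) + (\<Sum>k\<in>UNIV. \<bar>real_of_int (B$j$k)\<bar>)) < 1"
      by (intro powr_less_one) auto
    moreover have "2 powr (- (\<Sum>k\<in>UNIV. real_of_int (B$j$k) * m$k)) * 2 powr (\<Sum>k\<in>UNIV. \<bar>real_of_int (B$j$k)\<bar>)
        = 2 powr (- (\<Sum>k\<in>UNIV. real_of_int (B$j$k) * m$k) + (\<Sum>k\<in>UNIV. \<bar>real_of_int (B$j$k)\<bar>))"
      by (subst powr_add) simp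
    ultimately show ?thesis
      using prod_powr_bounds(1)[OF assms(1), of "\<lambda>k. real_of_int (B$j$k)"]
      by linarith
  qed
  then show ?thesis using U_iff[OF nz] by blast
qed

lemma monomial_Qm_bounds:
  assumes "z \<in> Qm m"
  shows "(cmod (monomial \<beta> z))\<^sup>2 \<le> 2 powr (- 2 * (\<Sum>k\<in>UNIV. \<beta>$k * m$k)) * 2 powr (\<Sum>k\<in>UNIV. 2 * \<bar>\<beta>$k\<bar>)"
        "2 powr (- 2 * (\<Sum>k\<in>UNIV. \<beta>$k * m$k)) * 2 powr (- (\<Sum>k\<in>UNIV. 2 * \<bar>\<beta>$k\<bar>)) \<le> (cmod (monomial \<beta> z))\<^sup>2"
proof -
  have nz: "\<forall>k. z $ k \<noteq> 0" using Qm_nonzero[OF assms(1)] by fastforce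
  have e1: "(\<Sum>k\<in>UNIV. 2 * real_of_int (\<beta>$k) * m$k) = 2 * (\<Sum>k\<in>UNIV. \<beta>$k * m$k)"
    by (simp add: sum_distrib_left mult.assoc)
  have e2: "(\<Sum>k\<in>UNIV. \<bar>2 * real_of_int (\<beta>$k)\<bar>) = (\<Sum>k\<in>UNIV. 2 * \<bar>\<beta>$k\<bar>)"
    by (simp add: abs_mult)
  show "(cmod (monomial \<beta> z))\<^sup>2 \<le> 2 powr (- 2 * (\<Sum>k\<in>UNIV. \<beta>$k * m$k)) * 2 powr (\<Sum>k\<in>UNIV. 2 * \<bar>\<beta>$k\<bar>)"
    using prod_powr_bounds(1)[OF assms(1), of "\<lambda>k. 2 * real_of_int (\<beta>$k)"]
    unfolding monomial_norm_sq[OF nz] e1 e2 by simp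
  show "2 powr (- 2 * (\<Sum>k\<in>UNIV. \<beta>$k * m$k)) * 2 powr (- (\<Sum>k\<in>UNIV. 2 * \<bar>\<beta>$k\<bar>)) \<le> (cmod (monomial \<beta> z))\<^sup>2"
    using prod_powr_bounds(2)[OF assms(1), of "\<lambda>k. 2 * real_of_int (\<beta>$k)"]
    unfolding monomial_norm_sq[OF nz] e1 e2 by simp
qed

lemma f_measurable:
  fixes B :: "int^'n^'n"
  shows "(\<lambda>z. ennreal ((cmod (monomial \<beta> z))\<^sup>2) * indicator (monomial_polyhedron B) z) \<in> borel_measurable lborel"
  using monomial_measurable[of \<beta>] U_borel[of B] by simp

lemma integral_upper:
  fixes B :: "int^'n^'n" and \<beta> :: "int^'n"
  shows "(\<integral>\<^sup>+z. ennreal ((cmod (monomial \<beta> z))\<^sup>2) * indicator (monomial_polyhedron B) z \<partial>lborel)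
   \<le> (\<integral>\<^sup>+m. ennreal (if \<forall>j. (\<Sum>k\<in>UNIV. B$j$k * m$k) + (\<Sum>k\<in>UNIV. \<bar>B$j$k\<bar>) > 0
          then 2 powr (\<Sum>k\<in>UNIV. 2 * \<bar>real_of_int (\<beta>$k)\<bar>) * 4 ^ CARD('n) *
               2 powr (- 2 * (\<Sum>k\<in>UNIV. real_of_int (\<beta>$k + 1) * real_of_int (m$k))) else 0)
        \<partial>count_space UNIV)"
proof -
  let ?U = "monomial_polyhedron B"
  define f where "f z = ennreal ((cmod (monomial \<beta> z))\<^sup>2) * indicator ?U z" for z
  define cond where "cond m \<longleftrightarrow> (\<forall>j. (\<Sum>k\<in>UNIV. B$j$k * m$k) + (\<Sum>k\<in>UNIV. \<bar>B$j$k\<bar>) > 0)" for m :: "int^'n"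
  define C1 where "C1 = 2 powr (\<Sum>k\<in>UNIV. 2 * \<bar>real_of_int (\<beta>$k)\<bar>)"
  define G where "G m = (if cond m then C1 * 2 powr (- 2 * (\<Sum>k\<in>UNIV. real_of_int (\<beta>$k) * real_of_int (m$k))) else 0)" for m
  have fm: "f \<in> borel_measurable lborel" unfolding f_def by (rule f_measurable)
  have Qm_sets: "Qm m \<in> sets lborel" for m :: "int^'n" using Qm_borel by simp
  have "AE z in lborel. f z \<le> (\<integral>\<^sup>+m. f z * indicator (Qm m) z \<partial>count_space UNIV)"
    using AE_nonzero
  proof eventually_elim
    case (elim z)
    define m0 where "m0 = (\<chi> k. \<lfloor>- log 2 (cmod (z$k))\<rfloor>)"
    have z0: "z \<in> Qm m0" unfolding m0_def by (rule Qm_cover[OF elim])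
    have "f z = (\<integral>\<^sup>+m. f z * indicator {m0} m \<partial>count_space UNIV)"
      by (subst nn_integral_cmult_indicator) auto
    also have "\<dots> \<le> (\<integral>\<^sup>+m. f z * indicator (Qm m) z \<partial>count_space UNIV)"
      using z0 by (intro nn_integral_mono) (auto split: split_indicator)
    finally show ?case .
  qed
  then have "(\<integral>\<^sup>+z. f z \<partial>lborel) \<le> (\<integral>\<^sup>+z. \<integral>\<^sup>+m. f z * indicator (Qm m) z \<partial>count_space UNIV \<partial>lborel)"
    by (rule nn_integral_mono_AE)
  also have "\<dots> = (\<integral>\<^sup>+m. \<integral>\<^sup>+z. f z * indicator (Qm m) z \<partial>lborel \<partial>count_space UNIV)"
    by (rule nn_integral_count_space_nn_integral) (use fm Qm_sets in auto)
  also have "\<dots> \<le> (\<integral>\<^sup>+m. ennreal (G m) * emeasure lborel (Qm m) \<partial>count_space UNIV)"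
  proof (intro nn_integral_mono)
    fix m :: "int^'n"
    have "(\<integral>\<^sup>+z. f z * indicator (Qm m) z \<partial>lborel) \<le> (\<integral>\<^sup>+z. ennreal (G m) * indicator (Qm m) z \<partial>lborel)"
    proof (intro nn_integral_mono)
      fix z
      show "f z * indicator (Qm m) z \<le> ennreal (G m) * indicator (Qm m) z"
      proof (cases "z \<in> Qm m \<and> z \<in> ?U")
        case True
        then have c: "cond m" unfolding cond_def using U_Qm_cond by blast
        have "(cmod (monomial \<beta> z))\<^sup>2 \<le> G m"
          using monomial_Qm_bounds(1)[of z m \<beta>] True c
          by (simp add: G_def C1_def mult.commute)
        then show ?thesis using True by (simp add: f_def ennreal_leI)
      next
        case False
        then show ?thesis by (auto simp: f_def split: split_indicator)
      qed
    qed
    also have "\<dots> = ennreal (G m) * emeasure lborel (Qm m)"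
      by (rule nn_integral_cmult_indicator) (rule Qm_sets)
    finally show "(\<integral>\<^sup>+z. f z * indicator (Qm m) z \<partial>lborel) \<le> ennreal (G m) * emeasure lborel (Qm m)" .
  qed
  also have "\<dots> \<le> (\<integral>\<^sup>+m. ennreal (G m) * ennreal (\<Prod>k\<in>UNIV. 4 * 2 powr (- 2 * real_of_int (m$k))) \<partial>count_space UNIV)"
    by (intro nn_integral_mono mult_left_mono Qm_box_upper) auto
  also have "\<dots> = (\<integral>\<^sup>+m. ennreal (if cond m
          then C1 * 4 ^ CARD('n) *
               2 powr (- 2 * (\<Sum>k\<in>UNIV. real_of_int (\<beta>$k + 1) * real_of_int (m$k))) else 0)
        \<partial>count_space UNIV)"
  proof (intro nn_integral_cong)
    fix m :: "int^'n"
    have p: "(\<Prod>k\<in>UNIV. 4 * 2 powr (- 2 * real_of_int (m$k))) = 4 ^ CARD('n) * 2 powr (- 2 * (\<Sum>k\<in>UNIV. real_of_int (m$k)))"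
      by (simp add: prod.distrib powr_sum sum_distrib_left flip: sum_negf)
    have s: "(\<Sum>k\<in>UNIV. real_of_int (\<beta>$k + 1) * real_of_int (m$k)) = (\<Sum>k\<in>UNIV. real_of_int (\<beta>$k) * real_of_int (m$k)) + (\<Sum>k\<in>UNIV. real_of_int (m$k))"
      by (simp add: algebra_simps sum.distrib)
    have e: "G m * (\<Prod>k\<in>UNIV. 4 * 2 powr (- 2 * real_of_int (m$k))) = (if cond m
          then C1 * 4 ^ CARD('n) *
               2 powr (- 2 * (\<Sum>k\<in>UNIV. real_of_int (\<beta>$k + 1) * real_of_int (m$k))) else 0)"
    proof -
      have "2 powr (- 2 * ((\<Sum>k\<in>UNIV. real_of_int (\<beta>$k) * real_of_int (m$k)) + (\<Sum>k\<in>UNIV. real_of_int (m$k))))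
          = 2 powr (- 2 * (\<Sum>k\<in>UNIV. real_of_int (\<beta>$k) * real_of_int (m$k))) * 2 powr (- 2 * (\<Sum>k\<in>UNIV. real_of_int (m$k)))"
        by (simp add: powr_add[symmetric] algebra_simps)
      then show ?thesis unfolding p s G_def by (simp add: mult_ac)
    qed
    have "G m \<ge> 0" by (simp add: G_def C1_def)
    then show "ennreal (G m) * ennreal (\<Prod>k\<in>UNIV. 4 * 2 powr (- 2 * real_of_int (m$k))) = ennreal (if cond m
          then C1 * 4 ^ CARD('n) *
               2 powr (- 2 * (\<Sum>k\<in>UNIV. real_of_int (\<beta>$k + 1) * real_of_int (m$k))) else 0)"
      unfolding e[symmetric] by (rule ennreal_mult[symmetric]) (auto intro: prod_nonneg)
  qed
  finally show ?thesis unfolding f_def cond_def C1_def by simp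
qed

lemma geom_int_summable:
  fixes a :: real and c :: int
  assumes "a > 0"
  shows "Infinite_Set_Sum.abs_summable_on (\<lambda>t::int. if t \<in> {c<..} then 2 powr (- a * t) else 0) UNIV"
proof -
  have bij: "bij_betw (\<lambda>n::nat. c + 1 + int n) UNIV {c<..}"
  proof (rule bij_betwI[where g = "\<lambda>t. nat (t - c - 1)"])
    show "(\<lambda>n::nat. c + 1 + int n) \<in> UNIV \<rightarrow> {c<..}" by auto
    show "(\<lambda>t. nat (t - c - 1)) \<in> {c<..} \<rightarrow> UNIV" by auto
  qed auto
  have q: "\<bar>2 powr (- a)\<bar> < (1::real)" using assms by (simp add: powr_less_one)
  have "summable (\<lambda>n. 2 powr (- a * (c + 1)) * (2 powr (- a)) ^ n)"
    by (intro summable_mult summable_geometric) (use q in simp)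
  moreover have "2 powr (- a * real_of_int (c + 1 + int n)) = 2 powr (- a * (c + 1)) * (2 powr (- a)) ^ n" for n
    by (simp add: powr_realpow[symmetric] powr_powr powr_add[symmetric] algebra_simps)
  ultimately have "summable (\<lambda>n. norm (2 powr (- a * real_of_int (c + 1 + int n))))"
    by simp
  then have "Infinite_Set_Sum.abs_summable_on (\<lambda>n. 2 powr (- a * real_of_int (c + 1 + int n))) UNIV"
    by (simp add: abs_summable_on_nat_iff')
  then have "Infinite_Set_Sum.abs_summable_on (\<lambda>t::int. 2 powr (- a * t)) {c<..}"
    using abs_summable_on_reindex_bij_betw[OF bij, of "\<lambda>t::int. 2 powr (- a * t)"] by simp
  then show ?thesis by (subst abs_summable_on_restrict'[symmetric]) auto
qed

lemma prod_summable_finite: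
  fixes h :: "'n::finite \<Rightarrow> int \<Rightarrow> real"
  assumes "\<And>j. Infinite_Set_Sum.abs_summable_on (h j) UNIV" "\<And>j t. h j t \<ge> 0"
  shows "(\<integral>\<^sup>+y. ennreal (C * (\<Prod>j\<in>UNIV. h j (y $ j))) \<partial>count_space (UNIV :: (int^'n) set)) < \<infinity>"
proof -
  have bij: "bij_betw vec_lambda (UNIV :: ('n \<Rightarrow> int) set) (UNIV :: (int^'n) set)"
    by (intro bij_betwI[of _ _ _ vec_nth]) auto
  have PU: "(UNIV :: ('n \<Rightarrow> int) set) = PiE UNIV (\<lambda>_. UNIV)" by (auto simp: PiE_UNIV_domain)
  have "(\<integral>\<^sup>+y. ennreal (C * (\<Prod>j\<in>UNIV. h j (y $ j))) \<partial>count_space (UNIV :: (int^'n) set))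
      = (\<integral>\<^sup>+f. ennreal (C * (\<Prod>j\<in>UNIV. h j ((vec_lambda f :: int^'n) $ j))) \<partial>count_space (UNIV :: ('n \<Rightarrow> int) set))"
    by (rule nn_integral_bij_count_space[OF bij, symmetric])
  also have "\<dots> \<le> (\<integral>\<^sup>+f. ennreal (\<bar>C\<bar> * (\<Prod>j\<in>UNIV. h j (f j))) \<partial>count_space (UNIV :: ('n \<Rightarrow> int) set))"
  proof (intro nn_integral_mono ennreal_leI)
    fix f :: "'n \<Rightarrow> int"
    have e: "(vec_lambda f :: int^'n) $ j = f j" for j by (simp add: vec_lambda_inverse)
    show "C * (\<Prod>j\<in>UNIV. h j ((vec_lambda f :: int^'n) $ j)) \<le> \<bar>C\<bar> * (\<Prod>j\<in>UNIV. h j (f j))"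
      unfolding e by (rule mult_right_mono) (auto intro!: prod_nonneg assms(2))
  qed
  also have "\<dots> = ennreal (infsetsum (\<lambda>f. \<bar>C\<bar> * (\<Prod>j\<in>UNIV. h j (f j))) (PiE UNIV (\<lambda>_. UNIV)))"
    unfolding PU[symmetric]
  proof (rule nn_integral_conv_infsetsum)
    show "Infinite_Set_Sum.abs_summable_on (\<lambda>f. \<bar>C\<bar> * (\<Prod>j\<in>UNIV. h j (f j))) UNIV"
      unfolding PU by (intro abs_summable_on_cmult_right abs_summable_on_prod_PiE assms) auto
  qed (auto intro!: mult_nonneg_nonneg prod_nonneg assms(2))
  also have "\<dots> < \<infinity>" by simp
  finally show ?thesis .
qed

lemma sum_if_mult: "(\<Sum>k\<in>UNIV. (if i = k then (c::int) else 0) * x k) = c * x (i::'n::finite)"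
proof -
  have "(\<Sum>k\<in>UNIV. (if i = k then c else 0) * x k) = (\<Sum>k\<in>UNIV. if i = k then c * x k else 0)"
    by (intro sum.cong) auto
  then show ?thesis by simp
qed

lemma lattice_finite:
  fixes B :: "int^'n^'n" and \<beta> :: "int^'n"
  assumes d: "det B > 0" and w: "\<forall>j. shifted_col \<beta> (adjugate B) j > 0"
  shows "(\<integral>\<^sup>+m. ennreal (if \<forall>j. (\<Sum>k\<in>UNIV. B$j$k * m$k) + (\<Sum>k\<in>UNIV. \<bar>B$j$k\<bar>) > 0
          then C * 2 powr (- 2 * (\<Sum>k\<in>UNIV. real_of_int (\<beta>$k + 1) * real_of_int (m$k))) else 0)
        \<partial>count_space UNIV) < \<infinity>"
proof -
  let ?A = "adjugate B"
  define dd where "dd = det B"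
  define wj where "wj j = shifted_col \<beta> ?A j" for j
  define R where "R j = (\<Sum>k\<in>UNIV. \<bar>B$j$k\<bar>)" for j
  define \<phi> where "\<phi> m = (\<chi> j. \<Sum>k\<in>UNIV. B$j$k * m$k)" for m :: "int^'n"
  define h where "h j t = (if t \<in> {- R j<..} then 2 powr (- (2 * wj j / dd) * t) else 0)" for j and t :: int
  have d0: "det B \<noteq> 0" using d by simp
  have ident: "dd * (\<Sum>k\<in>UNIV. (\<beta>$k + 1) * m$k) = (\<Sum>j\<in>UNIV. wj j * (\<phi> m $ j))" for m
  proof -
    have "(\<Sum>j\<in>UNIV. wj j * (\<phi> m $ j)) = (\<Sum>j\<in>UNIV. \<Sum>i\<in>UNIV. \<Sum>k\<in>UNIV. (\<beta>$i + 1) * m$k * (?A$i$j * B$j$k))"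
    proof (intro sum.cong refl)
      fix j
      have "wj j * (\<phi> m $ j) = (\<Sum>i\<in>UNIV. (\<beta>$i + 1) * ?A$i$j) * (\<Sum>k\<in>UNIV. B$j$k * m$k)"
        by (simp add: wj_def \<phi>_def shifted_col_def)
      also have "\<dots> = (\<Sum>i\<in>UNIV. \<Sum>k\<in>UNIV. ((\<beta>$i + 1) * ?A$i$j) * (B$j$k * m$k))"
        by (rule sum_product)
      also have "\<dots> = (\<Sum>i\<in>UNIV. \<Sum>k\<in>UNIV. (\<beta>$i + 1) * m$k * (?A$i$j * B$j$k))"
        by (intro sum.cong refl) (simp only: mult_ac)
      finally show "wj j * (\<phi> m $ j) = (\<Sum>i\<in>UNIV. \<Sum>k\<in>UNIV. (\<beta>$i + 1) * m$k * (?A$i$j * B$j$k))" .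
    qed
    also have "\<dots> = (\<Sum>i\<in>UNIV. \<Sum>k\<in>UNIV. (\<beta>$i + 1) * m$k * (\<Sum>j\<in>UNIV. ?A$i$j * B$j$k))"
    proof -
      have "(\<Sum>j\<in>UNIV. \<Sum>i\<in>UNIV. \<Sum>k\<in>UNIV. (\<beta>$i + 1) * m$k * (?A$i$j * B$j$k))
          = (\<Sum>i\<in>UNIV. \<Sum>j\<in>UNIV. \<Sum>k\<in>UNIV. (\<beta>$i + 1) * m$k * (?A$i$j * B$j$k))"
        by (rule sum.swap)
      also have "\<dots> = (\<Sum>i\<in>UNIV. \<Sum>k\<in>UNIV. \<Sum>j\<in>UNIV. (\<beta>$i + 1) * m$k * (?A$i$j * B$j$k))"
        by (intro sum.cong refl sum.swap)
      also have "\<dots> = (\<Sum>i\<in>UNIV. \<Sum>k\<in>UNIV. (\<beta>$i + 1) * m$k * (\<Sum>j\<in>UNIV. ?A$i$j * B$j$k))"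
        by (simp only: sum_distrib_left)
      finally show ?thesis .
    qed
    also have "\<dots> = (\<Sum>i\<in>UNIV. (\<beta>$i + 1) * m$i * dd)"
      by (simp add: adj_right[OF d0] dd_def if_distrib sum.delta cong: if_cong)
    finally show ?thesis by (simp add: sum_distrib_left mult_ac)
  qed
  have inj: "inj \<phi>"
  proof (rule injI)
    fix m m' assume eq: "\<phi> m = \<phi> m'"
    have rec: "(\<Sum>j\<in>UNIV. ?A$i$j * (\<phi> m $ j)) = dd * m$i" for m i
    proof -
      have "(\<Sum>j\<in>UNIV. ?A$i$j * (\<phi> m $ j)) = (\<Sum>k\<in>UNIV. (\<Sum>j\<in>UNIV. ?A$i$j * B$j$k) * m$k)"
        by (simp add: \<phi>_def sum_distrib_left sum_distrib_right mult_ac) (subst sum.swap, simp)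
      also have "\<dots> = dd * m$i"
        by (simp add: adj_right[OF d0] dd_def sum_if_mult)
      finally show ?thesis .
    qed
    have "dd * m$i = dd * m'$i" for i
    proof -
      have "dd * m$i = (\<Sum>j\<in>UNIV. ?A$i$j * (\<phi> m $ j))" by (rule rec[symmetric])
      also have "\<dots> = (\<Sum>j\<in>UNIV. ?A$i$j * (\<phi> m' $ j))" by (simp only: eq)
      also have "\<dots> = dd * m'$i" by (rule rec)
      finally show ?thesis .
    qed
    then show "m = m'" using d0 by (simp add: vec_eq_iff dd_def)
  qed
  have pw: "ennreal (if \<forall>j. (\<Sum>k\<in>UNIV. B$j$k * m$k) + (\<Sum>k\<in>UNIV. \<bar>B$j$k\<bar>) > 0
          then C * 2 powr (- 2 * (\<Sum>k\<in>UNIV. real_of_int (\<beta>$k + 1) * real_of_int (m$k))) else 0)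
        = ennreal (C * (\<Prod>j\<in>UNIV. h j (\<phi> m $ j)))" for m
  proof (cases "\<forall>j. (\<Sum>k\<in>UNIV. B$j$k * m$k) + (\<Sum>k\<in>UNIV. \<bar>B$j$k\<bar>) > 0")
    case True
    have "\<phi> m $ j \<in> {- R j<..}" for j
    proof -
      have "0 < (\<Sum>k\<in>UNIV. B $ j $ k * m $ k) + (\<Sum>k\<in>UNIV. \<bar>B $ j $ k\<bar>)" using True by blast
      then show ?thesis by (simp add: \<phi>_def R_def)
    qed
    then have "(\<Prod>j\<in>UNIV. h j (\<phi> m $ j)) = (\<Prod>j\<in>UNIV. 2 powr (- (2 * wj j / dd) * (\<phi> m $ j)))"
      by (simp add: h_def)
    also have "\<dots> = 2 powr (\<Sum>j\<in>UNIV. - (2 * wj j / dd) * (\<phi> m $ j))"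
      by (simp add: powr_sum)
    also have "(\<Sum>j\<in>UNIV. - (2 * wj j / dd) * (\<phi> m $ j)) = - 2 * real_of_int (\<Sum>j\<in>UNIV. wj j * (\<phi> m $ j)) / dd"
      by (simp add: sum_divide_distrib sum_negf sum_distrib_left mult_ac)
    also have "\<dots> = - 2 * (\<Sum>k\<in>UNIV. real_of_int (\<beta>$k + 1) * real_of_int (m$k))"
      using d unfolding ident[of m, symmetric] by (simp add: dd_def)
    finally show ?thesis using True by simp
  next
    case False
    then obtain j where j: "\<not> (\<Sum>k\<in>UNIV. B$j$k * m$k) + (\<Sum>k\<in>UNIV. \<bar>B$j$k\<bar>) > 0" by blast
    then have "h j (\<phi> m $ j) = 0" by (auto simp: h_def \<phi>_def R_def)
    then have p0: "(\<Prod>j\<in>UNIV. h j (\<phi> m $ j)) = 0" by (intro prod_zero) auto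
    show ?thesis by (subst if_not_P[OF False]) (simp only: p0 mult_zero_right)
  qed
  define g where "g y = ennreal (C * (\<Prod>j\<in>UNIV. h j (y $ j)))" for y :: "int^'n"
  have "(\<integral>\<^sup>+m. ennreal (if \<forall>j. (\<Sum>k\<in>UNIV. B$j$k * m$k) + (\<Sum>k\<in>UNIV. \<bar>B$j$k\<bar>) > 0
          then C * 2 powr (- 2 * (\<Sum>k\<in>UNIV. real_of_int (\<beta>$k + 1) * real_of_int (m$k))) else 0)
        \<partial>count_space UNIV) = (\<integral>\<^sup>+m. g (\<phi> m) \<partial>count_space UNIV)"
    by (simp add: pw g_def)
  also have "\<dots> = (\<integral>\<^sup>+y. g y \<partial>count_space (range \<phi>))"
    by (rule nn_integral_bij_count_space) (use inj in \<open>simp add: bij_betw_def\<close>)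
  also have "\<dots> = (\<integral>\<^sup>+y. g y * indicator (range \<phi>) y \<partial>count_space UNIV)"
    by (rule nn_integral_count_space_indicator) simp
  also have "\<dots> \<le> (\<integral>\<^sup>+y. g y \<partial>count_space UNIV)"
    by (intro nn_integral_mono) (auto split: split_indicator)
  also have "\<dots> < \<infinity>"
    unfolding g_def
  proof (rule prod_summable_finite)
    fix j
    have "wj j > 0" using w by (simp add: wj_def)
    then have "real_of_int (2 * wj j) / real_of_int dd > 0" using d by (simp add: dd_def)
    then show "Infinite_Set_Sum.abs_summable_on (h j) UNIV"
      unfolding h_def by (rule geom_int_summable)
  qed (simp add: h_def)
  finally show ?thesis .
qed

lemma suminf_const_top: "(c::ennreal) > 0 \<Longrightarrow> (\<Sum>t::nat. c) = \<infinity>"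
proof -
  assume c: "c > 0"
  have "of_nat n * c \<le> (\<Sum>t::nat. c)" for n
  proof -
    have "of_nat n * c = (\<Sum>t<n. c)" by simp
    also have "\<dots> \<le> (\<Sum>t::nat. c)" by (intro sum_le_suminf) (auto intro: summableI)
    finally show ?thesis .
  qed
  then have "(SUP n. c * of_nat n) \<le> (\<Sum>t::nat. c)" by (auto intro!: SUP_least simp: mult.commute)
  moreover have "(SUP n. c * of_nat n) = c * (SUP n. of_nat n :: ennreal)" by (simp add: SUP_mult_left_ennreal)
  moreover have "c * (SUP n. of_nat n :: ennreal) = \<infinity>" using c by (simp add: ennreal_SUP_of_nat_eq_top ennreal_mult_top)
  ultimately show ?thesis by (simp add: top_unique)
qed

lemma integral_infinite:
  fixes B :: "int^'n^'n" and \<beta> :: "int^'n"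
  assumes d: "det B > 0" and wj: "shifted_col \<beta> (adjugate B) j \<le> 0"
  shows "(\<integral>\<^sup>+z. ennreal ((cmod (monomial \<beta> z))\<^sup>2) * indicator (monomial_polyhedron B) z \<partial>lborel) = \<infinity>"
proof -
  let ?A = "adjugate B"
  let ?U = "monomial_polyhedron B"
  define w where "w r = shifted_col \<beta> ?A r" for r
  define R where "R i = (\<Sum>k\<in>UNIV. \<bar>B$i$k\<bar>)" for i
  define S where "S = (\<Sum>i\<in>UNIV. R i) + 1"
  define v where "v t = (\<chi> i. (if i = j then int t else 0) + S)" for t :: nat
  define m where "m t = (\<chi> k. \<Sum>r\<in>UNIV. ?A$k$r * v t $ r)" for t
  define f where "f z = ennreal ((cmod (monomial \<beta> z))\<^sup>2) * indicator ?U z" for z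
  define K where "K = S * (\<Sum>r\<in>UNIV. w r)"
  define C0 where "C0 = 2 powr (- (\<Sum>k\<in>UNIV. 2 * \<bar>real_of_int (\<beta>$k)\<bar>)) * (1/100::real) ^ CARD('n)"
  have R0: "R i \<ge> 0" for i by (simp add: R_def sum_nonneg)
  have SR: "S > R i" for i
  proof -
    have "R i \<le> (\<Sum>i\<in>UNIV. R i)" by (rule member_le_sum) (auto intro: R0)
    then show ?thesis by (simp add: S_def)
  qed
  have S1: "S \<ge> 1" using R0 by (simp add: S_def sum_nonneg)
  have Bm: "(\<Sum>k\<in>UNIV. B$i$k * m t $ k) = det B * v t $ i" for i t
  proof -
    have "(\<Sum>k\<in>UNIV. B$i$k * m t $ k) = (\<Sum>k\<in>UNIV. \<Sum>r\<in>UNIV. B$i$k * ?A$k$r * v t $ r)"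
      by (simp add: m_def sum_distrib_left mult.assoc)
    also have "\<dots> = (\<Sum>r\<in>UNIV. \<Sum>k\<in>UNIV. B$i$k * ?A$k$r * v t $ r)" by (rule sum.swap)
    also have "\<dots> = (\<Sum>r\<in>UNIV. (\<Sum>k\<in>UNIV. B$i$k * ?A$k$r) * v t $ r)"
      by (simp only: sum_distrib_right)
    also have "\<dots> = det B * v t $ i" by (simp only: adj_left sum_if_mult)
    finally show ?thesis .
  qed
  have vS: "v t $ i \<ge> S" for t i by (simp add: v_def)
  have cond: "\<forall>i. (\<Sum>k\<in>UNIV. B$i$k * m t $ k) > (\<Sum>k\<in>UNIV. \<bar>B$i$k\<bar>)" for t
  proof
    fix i
    have "det B * v t $ i \<ge> 1 * v t $ i" using d vS[of t i] S1 by (intro mult_right_mono) auto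
    then show "(\<Sum>k\<in>UNIV. B$i$k * m t $ k) > (\<Sum>k\<in>UNIV. \<bar>B$i$k\<bar>)"
      using SR[of i] vS[of t i] unfolding Bm R_def by linarith
  qed
  have QU: "Qm (m t) \<subseteq> ?U" for t using Qm_U_cond[OF _ cond] by blast
  have expo: "(\<Sum>k\<in>UNIV. (\<beta>$k + 1) * m t $ k) \<le> K" for t
  proof -
    have "(\<Sum>k\<in>UNIV. (\<beta>$k + 1) * m t $ k) = (\<Sum>k\<in>UNIV. \<Sum>r\<in>UNIV. (\<beta>$k + 1) * ?A$k$r * v t $ r)"
      by (simp add: m_def sum_distrib_left mult.assoc)
    also have "\<dots> = (\<Sum>r\<in>UNIV. \<Sum>k\<in>UNIV. (\<beta>$k + 1) * ?A$k$r * v t $ r)" by (rule sum.swap)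
    also have "\<dots> = (\<Sum>r\<in>UNIV. w r * v t $ r)"
      by (simp only: sum_distrib_right w_def shifted_col_def)
    also have "\<dots> = (\<Sum>r\<in>UNIV. w r * (if r = j then int t else 0)) + S * (\<Sum>r\<in>UNIV. w r)"
      by (simp add: v_def algebra_simps sum.distrib sum_distrib_left)
    also have "(\<Sum>r\<in>UNIV. w r * (if r = j then int t else 0)) = w j * int t"
      by (simp add: if_distrib[of "\<lambda>x. w _ * x"] cong: if_cong)
    also have "w j * int t \<le> 0" using wj by (simp add: w_def mult_nonpos_nonneg)
    finally show ?thesis by (simp add: K_def)
  qed
  have inj: "inj m"
  proof (rule injI)
    fix t t' assume eq: "m t = m t'"
    have "det B * v t $ j = det B * v t' $ j" by (metis Bm eq)
    then show "t = t'" using d by (simp add: v_def)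
  qed
  define E where "E t = Em (m t)" for t
  have Esets: "E t \<in> sets lborel" for t by (simp add: E_def Em_def)
  have disj: "disjoint_family E"
    unfolding disjoint_family_on_def E_def
    using Em_sub Qm_disjoint inj by (metis (no_types, lifting) disjoint_iff inj_eq subset_iff)
  have fm: "f \<in> borel_measurable lborel" unfolding f_def by (rule f_measurable)
  have "(\<Sum>t. \<integral>\<^sup>+z. f z * indicator (E t) z \<partial>lborel) = (\<integral>\<^sup>+z. (\<Sum>t. f z * indicator (E t) z) \<partial>lborel)"
    by (rule nn_integral_suminf[symmetric]) (use fm Esets in auto)
  also have "\<dots> \<le> (\<integral>\<^sup>+z. f z \<partial>lborel)"
  proof (intro nn_integral_mono)
    fix z
    have "(\<Sum>t. f z * indicator (E t) z) = f z * indicator (\<Union>t. E t) z"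
      by (simp add: suminf_indicator[OF disj])
    also have "\<dots> \<le> f z" by (auto split: split_indicator)
    finally show "(\<Sum>t. f z * indicator (E t) z) \<le> f z" .
  qed
  finally have le: "(\<Sum>t. \<integral>\<^sup>+z. f z * indicator (E t) z \<partial>lborel) \<le> (\<integral>\<^sup>+z. f z \<partial>lborel)" .
  define c where "c = C0 * 2 powr (- 2 * K)"
  have c0: "c > 0" by (simp add: c_def C0_def)
  have tm: "ennreal c \<le> (\<integral>\<^sup>+z. f z * indicator (E t) z \<partial>lborel)" for t
  proof -
    define L where "L = 2 powr (- 2 * (\<Sum>k\<in>UNIV. real_of_int (\<beta>$k) * real_of_int (m t $ k))) * 2 powr (- (\<Sum>k\<in>UNIV. 2 * \<bar>real_of_int (\<beta>$k)\<bar>))"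
    have "(\<integral>\<^sup>+z. ennreal L * indicator (E t) z \<partial>lborel) \<le> (\<integral>\<^sup>+z. f z * indicator (E t) z \<partial>lborel)"
    proof (intro nn_integral_mono)
      fix z
      show "ennreal L * indicator (E t) z \<le> f z * indicator (E t) z"
      proof (cases "z \<in> E t")
        case True
        then have zQ: "z \<in> Qm (m t)" using Em_sub by (auto simp: E_def)
        then have "z \<in> ?U" using QU by auto
        moreover have "L \<le> (cmod (monomial \<beta> z))\<^sup>2"
          using monomial_Qm_bounds(2)[OF zQ, of \<beta>] by (simp add: L_def)
        ultimately show ?thesis using True by (simp add: f_def ennreal_leI)
      qed simp
    qed
    moreover have "(\<integral>\<^sup>+z. ennreal L * indicator (E t) z \<partial>lborel) = ennreal L * emeasure lborel (E t)"
      by (rule nn_integral_cmult_indicator) (rule Esets)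
    moreover have "emeasure lborel (E t) = ennreal (\<Prod>k\<in>UNIV. 1/100 * 2 powr (- 2 * real_of_int (m t $ k)))"
      unfolding E_def by (rule Em_measure)
    moreover have "c \<le> L * (\<Prod>k\<in>UNIV. 1/100 * 2 powr (- 2 * real_of_int (m t $ k)))"
    proof -
      have p: "(\<Prod>k\<in>UNIV. 1/100 * 2 powr (- 2 * real_of_int (m t $ k))) = (1/100::real) ^ CARD('n) * 2 powr (- 2 * (\<Sum>k\<in>UNIV. real_of_int (m t $ k)))"
      proof -
        have "(\<Prod>k\<in>UNIV. 1/100 * 2 powr (- 2 * real_of_int (m t $ k))) = (\<Prod>k\<in>(UNIV::'n set). 1/100::real) * (\<Prod>k\<in>UNIV. 2 powr (- 2 * real_of_int (m t $ k)))"
          by (rule prod.distrib)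
        also have "(\<Prod>k\<in>(UNIV::'n set). 1/100::real) = (1/100) ^ CARD('n)" by simp
        also have "(\<Prod>k\<in>UNIV. 2 powr (- 2 * real_of_int (m t $ k))) = 2 powr (- 2 * (\<Sum>k\<in>UNIV. real_of_int (m t $ k)))"
          by (simp add: powr_sum sum_distrib_left flip: sum_negf)
        finally show ?thesis .
      qed
      have e: "L * (\<Prod>k\<in>UNIV. 1/100 * 2 powr (- 2 * real_of_int (m t $ k))) = C0 * 2 powr (- 2 * real_of_int (\<Sum>k\<in>UNIV. (\<beta>$k + 1) * m t $ k))"
      proof -
        have "real_of_int (\<Sum>k\<in>UNIV. (\<beta>$k + 1) * m t $ k) = (\<Sum>k\<in>UNIV. real_of_int (\<beta>$k) * real_of_int (m t $ k)) + (\<Sum>k\<in>UNIV. real_of_int (m t $ k))"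
          by (simp add: algebra_simps sum.distrib)
        then have "2 powr (- 2 * real_of_int (\<Sum>k\<in>UNIV. (\<beta>$k + 1) * m t $ k)) =
            2 powr (- 2 * (\<Sum>k\<in>UNIV. real_of_int (\<beta>$k) * real_of_int (m t $ k))) * 2 powr (- 2 * (\<Sum>k\<in>UNIV. real_of_int (m t $ k)))"
          by (simp add: powr_add[symmetric] algebra_simps)
        then show ?thesis unfolding p L_def C0_def by (simp add: mult_ac)
      qed
      have "2 powr (- 2 * K) \<le> 2 powr (- 2 * real_of_int (\<Sum>k\<in>UNIV. (\<beta>$k + 1) * m t $ k))"
      proof -
        have ex: "real_of_int (\<Sum>k\<in>UNIV. (\<beta>$k + 1) * m t $ k) \<le> real_of_int K"
          using expo[of t] by (simp only: of_int_le_iff)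
        show ?thesis by (rule powr_mono) (use ex in linarith, simp)
      qed
      then show ?thesis unfolding e c_def by (intro mult_left_mono) (auto simp: C0_def)
    qed
    ultimately show ?thesis
      by (metis (no_types, lifting) ennreal_leI ennreal_mult' order_trans powr_ge_zero mult_nonneg_nonneg L_def)
  qed
  have "\<infinity> = (\<Sum>t::nat. ennreal c)" using c0 by (simp add: suminf_const_top)
  also have "\<dots> \<le> (\<Sum>t. \<integral>\<^sup>+z. f z * indicator (E t) z \<partial>lborel)"
    by (intro suminf_le tm) (auto intro: summableI)
  also have "\<dots> \<le> (\<integral>\<^sup>+z. f z \<partial>lborel)" by (rule le)
  finally show ?thesis unfolding f_def by (simp add: top_unique)
qed


lemma S2_iff:
  fixes B :: "int^'n^'n"
  assumes "det B > 0"
  shows "\<beta> \<in> S2 (monomial_polyhedron B) \<longleftrightarrow> (\<forall>j. shifted_col \<beta> (adjugate B) j > 0)"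
proof -
  let ?U = "monomial_polyhedron B"
  have meas: "monomial \<beta> \<in> borel_measurable (lebesgue_on ?U)"
    by (intro measurable_restrict_space1 measurable_completion) (simp add: monomial_measurable)
  have Ul: "?U \<inter> space (completion lborel) \<in> sets (completion lborel)"
    using U_borel[of B] by simp
  have int_eq: "(\<integral>\<^sup>+z. ennreal ((cmod (monomial \<beta> z))\<^sup>2) \<partial>lebesgue_on ?U)
      = (\<integral>\<^sup>+z. ennreal ((cmod (monomial \<beta> z))\<^sup>2) * indicator ?U z \<partial>lborel)"
    by (simp add: nn_integral_restrict_space[OF Ul] nn_integral_completion)
  have "\<beta> \<in> S2 ?U \<longleftrightarrow> (\<integral>\<^sup>+z. ennreal ((cmod (monomial \<beta> z))\<^sup>2) * indicator ?U z \<partial>lborel) < \<infinity>"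
    unfolding S2_def using meas int_eq by simp
  also have "\<dots> \<longleftrightarrow> (\<forall>j. shifted_col \<beta> (adjugate B) j > 0)"
  proof
    assume fin: "(\<integral>\<^sup>+z. ennreal ((cmod (monomial \<beta> z))\<^sup>2) * indicator ?U z \<partial>lborel) < \<infinity>"
    show "\<forall>j. shifted_col \<beta> (adjugate B) j > 0"
    proof (rule ccontr)
      assume "\<not> (\<forall>j. shifted_col \<beta> (adjugate B) j > 0)"
      then obtain j where "shifted_col \<beta> (adjugate B) j \<le> 0" by (auto simp: not_less)
      from integral_infinite[OF assms this] fin show False by simp
    qed
  next
    assume w: "\<forall>j. shifted_col \<beta> (adjugate B) j > 0"
    show "(\<integral>\<^sup>+z. ennreal ((cmod (monomial \<beta> z))\<^sup>2) * indicator ?U z \<partial>lborel) < \<infinity>"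
      using integral_upper[of \<beta> B] lattice_finite[OF assms w] by (rule le_less_trans)
  qed
  finally show ?thesis .
qed

theorem proposition5p6:
  fixes B :: "int^'n^'n"
  assumes "bounded (monomial_polyhedron B)"
    and "det B > 0"
    and "\<forall>i j. matrix_inv (real_mat B) $ i $ j \<ge> 0"
  shows "(\<forall>\<beta>. \<beta> \<in> S2 (monomial_polyhedron B) \<longleftrightarrow>
              (\<forall>j. shifted_col \<beta> (adjugate B) j \<ge> col_gcd (adjugate B) j))
       \<and> (\<forall>j. \<exists>\<beta>. shifted_col \<beta> (adjugate B) j = col_gcd (adjugate B) j
                 \<and> \<beta> \<in> S2 (monomial_polyhedron B))"
proof -
  let ?A = "adjugate B"
  have d0: "det B \<noteq> 0" using assms(2) by simp
  have gpos: "col_gcd ?A j > 0" for j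
  proof -
    have "col_gcd ?A j \<ge> 0" by (simp add: col_gcd_def)
    moreover have "col_gcd ?A j \<noteq> 0"
    proof
      assume "col_gcd ?A j = 0"
      then have "\<forall>i. ?A $ i $ j = 0" unfolding col_gcd_def by (auto simp: Gcd_0_iff)
      then have "(\<Sum>i\<in>UNIV. B$j$i * ?A $ i $ j) = 0" by simp
      then show False using adj_left[of B j j] d0 by simp
    qed
    ultimately show ?thesis by simp
  qed
  have gdvd: "col_gcd ?A j dvd shifted_col \<beta> ?A j" for j \<beta>
    unfolding shifted_col_def col_gcd_def
    by (intro dvd_sum dvd_mult) (auto intro: Gcd_dvd)
  have P1: "shifted_col \<beta> ?A j \<ge> col_gcd ?A j \<longleftrightarrow> shifted_col \<beta> ?A j > 0" for \<beta> j
    using gpos[of j] gdvd[of j \<beta>] zdvd_imp_le by fastforce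
  have part1: "\<forall>\<beta>. \<beta> \<in> S2 (monomial_polyhedron B) \<longleftrightarrow>
              (\<forall>j. shifted_col \<beta> ?A j \<ge> col_gcd ?A j)"
    using S2_iff[OF assms(2)] P1 by simp
  have part2: "\<exists>\<beta>. shifted_col \<beta> ?A j = col_gcd ?A j \<and> \<beta> \<in> S2 (monomial_polyhedron B)" for j
  proof -
    obtain c where c: "(\<Sum>k\<in>UNIV. c k * ?A $ k $ j) = Gcd ((\<lambda>k. ?A $ k $ j) ` UNIV)"
      using Gcd_bezout_finite[of UNIV "\<lambda>k. ?A $ k $ j"] by auto
    define N where "N = (\<Sum>k\<in>UNIV. \<bar>\<Sum>i\<in>UNIV. c i * ?A $ i $ k\<bar>) + 1"
    define u where "u = (\<lambda>r. if r = j then 0 else N)"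
    define \<gamma> where "\<gamma> = (\<lambda>i. c i + (\<Sum>r\<in>UNIV. u r * B $ r $ i))"
    define \<beta> where "\<beta> = (\<chi> i. \<gamma> i - 1)"
    have sc: "shifted_col \<beta> ?A k = (\<Sum>i\<in>UNIV. c i * ?A $ i $ k) + u k * det B" for k
    proof -
      have "shifted_col \<beta> ?A k = (\<Sum>i\<in>UNIV. c i * ?A $ i $ k)
             + (\<Sum>i\<in>UNIV. \<Sum>r\<in>UNIV. u r * (B $ r $ i * ?A $ i $ k))"
        by (simp add: shifted_col_def \<beta>_def \<gamma>_def algebra_simps sum.distrib sum_distrib_right
              sum_distrib_left)
      also have "(\<Sum>i\<in>UNIV. \<Sum>r\<in>UNIV. u r * (B $ r $ i * ?A $ i $ k))
           = (\<Sum>r\<in>UNIV. u r * (\<Sum>i\<in>UNIV. B $ r $ i * ?A $ i $ k))"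
        by (subst sum.swap) (simp add: sum_distrib_left)
      also have "\<dots> = u k * det B"
        by (simp add: adj_left if_distrib sum.delta cong: if_cong)
      finally show ?thesis .
    qed
    have "shifted_col \<beta> ?A j = col_gcd ?A j"
      using sc[of j] c by (simp add: u_def col_gcd_def)
    moreover have "shifted_col \<beta> ?A k > 0" for k
    proof (cases "k = j")
      case True then show ?thesis using sc[of j] c gpos[of j] by (simp add: u_def col_gcd_def)
    next
      case False
      have "\<bar>\<Sum>i\<in>UNIV. c i * ?A $ i $ k\<bar> \<le> (\<Sum>k\<in>UNIV. \<bar>\<Sum>i\<in>UNIV. c i * ?A $ i $ k\<bar>)"
        by (rule member_le_sum) auto
      then have "N \<ge> \<bar>\<Sum>i\<in>UNIV. c i * ?A $ i $ k\<bar> + 1" by (simp add: N_def)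
      moreover have "N \<ge> 1" unfolding N_def by (simp add: sum_nonneg)
      then have "N * det B \<ge> N * 1" using assms(2) by (intro mult_left_mono) auto
      ultimately show ?thesis using sc[of k] False by (simp add: u_def)
    qed
    ultimately show ?thesis using S2_iff[OF assms(2)] by blast
  qed
  show ?thesis using part1 part2 by blast
qed

end
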